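(* Let $F,G:\mathcal C\rightrightarrows\mathcal D$ be functors between small categories. Their coequalizer $\mathrm{coeq}(F,G)$ in $\mathbf{Cat}$ is the following category: its set of objects is $Q_0$; its morphisms are those of the free category on the reflexive quiver $Q=(Q_0,Q_1)$, subject to the relations $[g]\circ[f]=[h]$ for $[f],[g],[h]\in Q_1$ whenever there exist composable morphisms $f'$, $g'$ of $\mathcal D$ with $[f']=[f]$, $[g']=[g]$ and $[g'\circ f']=[h]$ (i.e. representatives forming the boundary of a $2$-simplex of $N\mathcal D$).
   Context: $Q_0$ is the coequalizer in $\mathbf{Set}$ of the object maps $F_0,G_0:\mathrm{obj}\,\mathcal C\rightrightarrows\mathrm{obj}\,\mathcal D$ (the quotient of $\mathrm{obj}\,\mathcal D$ by the equivalence relation generated by $F(c)\sim G(c)$), and $Q_1$ is the coequalizer in $\mathbf{Set}$ of the morphism maps $F_1,G_1:\mathrm{mor}\,\mathcal C\rightrightarrows\mathrm{mor}\,\mathcal D$; classes are written $[x]$. Source, target and identity maps of $\mathcal D$ descend to make $Q=(Q_0,Q_1)$ a reflexive quiver (vertices $Q_0$, edges $Q_1$, source/target maps $Q_1\to Q_0$, distinguished loops the classes of identities); this is the $1$-truncation of the coequalizer of the nerves $NF,NG:N\mathcal C\rightrightarrows N\mathcal D$ in simplicial sets. The free category on a reflexive quiver has the vertices as objects and finite paths of non-distinguished edges as morphisms (distinguished loops becoming identities), composed by concatenation; "subject to the relations" means quotienting by the smallest congruence containing them. *)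

theory Defs
  imports Main
begin

text \<open>A small category: a set of objects, a set of morphisms, domain, codomain,
  identities and composition. Comp g f is g after f, defined when Cod f = Dom g.\<close>

record ('o, 'm) cat =
  Obj  :: "'o set"
  Mor  :: "'m set"
  Dom  :: "'m \<Rightarrow> 'o"
  Cod  :: "'m \<Rightarrow> 'o"
  Id   :: "'o \<Rightarrow> 'm"
  Comp :: "'m \<Rightarrow> 'm \<Rightarrow> 'm"

definition category :: "('o, 'm) cat \<Rightarrow> bool" where
  "category C \<longleftrightarrow>
     (\<forall>f\<in>Mor C. Dom C f \<in> Obj C \<and> Cod C f \<in> Obj C)
   \<and> (\<forall>a\<in>Obj C. Id C a \<in> Mor C \<and> Dom C (Id C a) = a \<and> Cod C (Id C a) = a)
   \<and> (\<forall>f\<in>Mor C. \<forall>g\<in>Mor C. Cod C f = Dom C g \<longrightarrow>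
         Comp C g f \<in> Mor C \<and> Dom C (Comp C g f) = Dom C f \<and> Cod C (Comp C g f) = Cod C g)
   \<and> (\<forall>f\<in>Mor C. Comp C f (Id C (Dom C f)) = f \<and> Comp C (Id C (Cod C f)) f = f)
   \<and> (\<forall>f\<in>Mor C. \<forall>g\<in>Mor C. \<forall>h\<in>Mor C. Cod C f = Dom C g \<longrightarrow> Cod C g = Dom C h \<longrightarrow>
         Comp C h (Comp C g f) = Comp C (Comp C h g) f)"

text \<open>A functor from C to D, given by its object map F0 and morphism map F1
  (only their values on the carriers of C matter).\<close>

definition "functor" :: "('a, 'b) cat \<Rightarrow> ('c, 'd) cat \<Rightarrow> ('a \<Rightarrow> 'c) \<Rightarrow> ('b \<Rightarrow> 'd) \<Rightarrow> bool" where
  "functor C D F0 F1 \<longleftrightarrow>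
     (\<forall>a\<in>Obj C. F0 a \<in> Obj D)
   \<and> (\<forall>f\<in>Mor C. F1 f \<in> Mor D \<and> Dom D (F1 f) = F0 (Dom C f) \<and> Cod D (F1 f) = F0 (Cod C f))
   \<and> (\<forall>a\<in>Obj C. F1 (Id C a) = Id D (F0 a))
   \<and> (\<forall>f\<in>Mor C. \<forall>g\<in>Mor C. Cod C f = Dom C g \<longrightarrow> F1 (Comp C g f) = Comp D (F1 g) (F1 f))"

text \<open>(E, Q0, Q1) is a coequalizer of the parallel pair F, G : C \<rightrightarrows> D in Cat,
  tested against all small categories whose object/morphism types are 'x / 'y
  (these type variables are universally quantified at the theorem level).\<close>

definition is_coequalizer ::
  "('a, 'b) cat \<Rightarrow> ('c, 'd) cat \<Rightarrow> ('a \<Rightarrow> 'c) \<Rightarrow> ('b \<Rightarrow> 'd) \<Rightarrow> ('a \<Rightarrow> 'c) \<Rightarrow> ('b \<Rightarrow> 'd)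
   \<Rightarrow> ('e, 'f) cat \<Rightarrow> ('c \<Rightarrow> 'e) \<Rightarrow> ('d \<Rightarrow> 'f) \<Rightarrow> ('x \<times> 'y) itself \<Rightarrow> bool" where
  "is_coequalizer C D F0 F1 G0 G1 E Q0 Q1 _ \<longleftrightarrow>
     category E \<and> functor D E Q0 Q1
   \<and> (\<forall>c\<in>Obj C. Q0 (F0 c) = Q0 (G0 c)) \<and> (\<forall>f\<in>Mor C. Q1 (F1 f) = Q1 (G1 f))
   \<and> (\<forall>(X :: ('x, 'y) cat) H0 H1.
        category X \<and> functor D X H0 H1
        \<and> (\<forall>c\<in>Obj C. H0 (F0 c) = H0 (G0 c)) \<and> (\<forall>f\<in>Mor C. H1 (F1 f) = H1 (G1 f))
        \<longrightarrow> (\<exists>K0 K1. functor E X K0 K1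
               \<and> (\<forall>d\<in>Obj D. K0 (Q0 d) = H0 d) \<and> (\<forall>f\<in>Mor D. K1 (Q1 f) = H1 f)
               \<and> (\<forall>K0' K1'. functor E X K0' K1'
                     \<and> (\<forall>d\<in>Obj D. K0' (Q0 d) = H0 d) \<and> (\<forall>f\<in>Mor D. K1' (Q1 f) = H1 f)
                     \<longrightarrow> (\<forall>e\<in>Obj E. K0' e = K0 e) \<and> (\<forall>m\<in>Mor E. K1' m = K1 m))))"

inductive objeq :: "('a, 'b) cat \<Rightarrow> ('c, 'd) cat \<Rightarrow> ('a \<Rightarrow> 'c) \<Rightarrow> ('a \<Rightarrow> 'c) \<Rightarrow> 'c \<Rightarrow> 'c \<Rightarrow> bool"
  for C D F0 G0 where
  oe_refl: "d \<in> Obj D \<Longrightarrow> objeq C D F0 G0 d d"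
| oe_gen:  "c \<in> Obj C \<Longrightarrow> objeq C D F0 G0 (F0 c) (G0 c)"
| oe_sym:  "objeq C D F0 G0 x y \<Longrightarrow> objeq C D F0 G0 y x"
| oe_trans: "objeq C D F0 G0 x y \<Longrightarrow> objeq C D F0 G0 y z \<Longrightarrow> objeq C D F0 G0 x z"

inductive moreq :: "('a, 'b) cat \<Rightarrow> ('c, 'd) cat \<Rightarrow> ('b \<Rightarrow> 'd) \<Rightarrow> ('b \<Rightarrow> 'd) \<Rightarrow> 'd \<Rightarrow> 'd \<Rightarrow> bool"
  for C D F1 G1 where
  me_refl: "f \<in> Mor D \<Longrightarrow> moreq C D F1 G1 f f"
| me_gen:  "f \<in> Mor C \<Longrightarrow> moreq C D F1 G1 (F1 f) (G1 f)"
| me_sym:  "moreq C D F1 G1 x y \<Longrightarrow> moreq C D F1 G1 y x"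
| me_trans: "moreq C D F1 G1 x y \<Longrightarrow> moreq C D F1 G1 y z \<Longrightarrow> moreq C D F1 G1 x z"

definition ocls :: "('a, 'b) cat \<Rightarrow> ('c, 'd) cat \<Rightarrow> ('a \<Rightarrow> 'c) \<Rightarrow> ('a \<Rightarrow> 'c) \<Rightarrow> 'c \<Rightarrow> 'c set" where
  "ocls C D F0 G0 d = {d'. objeq C D F0 G0 d d'}"

definition mcls :: "('a, 'b) cat \<Rightarrow> ('c, 'd) cat \<Rightarrow> ('b \<Rightarrow> 'd) \<Rightarrow> ('b \<Rightarrow> 'd) \<Rightarrow> 'd \<Rightarrow> 'd set" where
  "mcls C D F1 G1 f = {f'. moreq C D F1 G1 f f'}"

definition Q0 where "Q0 C D F0 G0 = ocls C D F0 G0 ` Obj D"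
definition Q1 where "Q1 C D F1 G1 = mcls C D F1 G1 ` Mor D"

definition qsrc where
  "qsrc C D F0 F1 G0 G1 e = ocls C D F0 G0 (Dom D (SOME f. f \<in> Mor D \<and> mcls C D F1 G1 f = e))"
definition qtgt where
  "qtgt C D F0 F1 G0 G1 e = ocls C D F0 G0 (Cod D (SOME f. f \<in> Mor D \<and> mcls C D F1 G1 f = e))"

definition distinguished where
  "distinguished C D F1 G1 e \<longleftrightarrow> (\<exists>d\<in>Obj D. e = mcls C D F1 G1 (Id D d))"

text \<open>A morphism of the free category is a triple (source, target, path), the path
  listing non-distinguished edges in order of traversal (first edge first);
  the empty path at a vertex is its identity.\<close>

type_synonym ('c, 'd) qpath = "'c set \<times> 'c set \<times> 'd set list"

fun path_ok where
  "path_ok C D F0 F1 G0 G1 a b [] \<longleftrightarrow> a \<in> Q0 C D F0 G0 \<and> b = a"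
| "path_ok C D F0 F1 G0 G1 a b (e # es) \<longleftrightarrow> a \<in> Q0 C D F0 G0 \<and> e \<in> Q1 C D F1 G1
     \<and> \<not> distinguished C D F1 G1 e \<and> qsrc C D F0 F1 G0 G1 e = a
     \<and> path_ok C D F0 F1 G0 G1 (qtgt C D F0 F1 G0 G1 e) b es"

definition valid_path :: "('a, 'b) cat \<Rightarrow> ('c, 'd) cat \<Rightarrow> ('a \<Rightarrow> 'c) \<Rightarrow> ('b \<Rightarrow> 'd) \<Rightarrow> ('a \<Rightarrow> 'c) \<Rightarrow> ('b \<Rightarrow> 'd)
    \<Rightarrow> ('c, 'd) qpath \<Rightarrow> bool" where
  "valid_path C D F0 F1 G0 G1 t = (case t of (a, b, p) \<Rightarrow> path_ok C D F0 F1 G0 G1 a b p)"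

definition epath where
  "epath C D F1 G1 e = (if distinguished C D F1 G1 e then [] else [e])"

inductive pcong :: "('a, 'b) cat \<Rightarrow> ('c, 'd) cat \<Rightarrow> ('a \<Rightarrow> 'c) \<Rightarrow> ('b \<Rightarrow> 'd) \<Rightarrow> ('a \<Rightarrow> 'c) \<Rightarrow> ('b \<Rightarrow> 'd)
    \<Rightarrow> ('c, 'd) qpath \<Rightarrow> ('c, 'd) qpath \<Rightarrow> bool"
  for C D F0 F1 G0 G1 where
  pc_refl: "valid_path C D F0 F1 G0 G1 t \<Longrightarrow> pcong C D F0 F1 G0 G1 t t"
| pc_rel: "\<lbrakk> f' \<in> Mor D; g' \<in> Mor D; Cod D f' = Dom D g' \<rbrakk> \<Longrightarrow>
     pcong C D F0 F1 G0 G1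
       (ocls C D F0 G0 (Dom D f'), ocls C D F0 G0 (Cod D g'),
          epath C D F1 G1 (mcls C D F1 G1 f') @ epath C D F1 G1 (mcls C D F1 G1 g'))
       (ocls C D F0 G0 (Dom D f'), ocls C D F0 G0 (Cod D g'),
          epath C D F1 G1 (mcls C D F1 G1 (Comp D g' f')))"
| pc_sym: "pcong C D F0 F1 G0 G1 s t \<Longrightarrow> pcong C D F0 F1 G0 G1 t s"
| pc_trans: "pcong C D F0 F1 G0 G1 s t \<Longrightarrow> pcong C D F0 F1 G0 G1 t u \<Longrightarrow> pcong C D F0 F1 G0 G1 s u"
| pc_comp: "pcong C D F0 F1 G0 G1 (a, b, p) (a, b, p') \<Longrightarrow> pcong C D F0 F1 G0 G1 (b, c, q) (b, c, q')
     \<Longrightarrow> pcong C D F0 F1 G0 G1 (a, c, p @ q) (a, c, p' @ q')"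

definition pcls where
  "pcls C D F0 F1 G0 G1 t = {t'. pcong C D F0 F1 G0 G1 t t'}"

definition coeq_cat :: "('a, 'b) cat \<Rightarrow> ('c, 'd) cat \<Rightarrow> ('a \<Rightarrow> 'c) \<Rightarrow> ('b \<Rightarrow> 'd) \<Rightarrow> ('a \<Rightarrow> 'c) \<Rightarrow> ('b \<Rightarrow> 'd)
    \<Rightarrow> ('c set, ('c, 'd) qpath set) cat" where
  "coeq_cat C D F0 F1 G0 G1 =
     \<lparr> Obj = Q0 C D F0 G0,
       Mor = pcls C D F0 F1 G0 G1 ` {t. valid_path C D F0 F1 G0 G1 t},
       Dom = (\<lambda>X. fst (SOME t. t \<in> X)),
       Cod = (\<lambda>X. fst (snd (SOME t. t \<in> X))),
       Id = (\<lambda>a. pcls C D F0 F1 G0 G1 (a, a, [])),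
       Comp = (\<lambda>Y X. case (SOME t. t \<in> X) of (a, _, p) \<Rightarrow>
                      (case (SOME t. t \<in> Y) of (_, c, q) \<Rightarrow> pcls C D F0 F1 G0 G1 (a, c, p @ q))) \<rparr>"

definition coeq_obj where
  "coeq_obj C D F0 G0 d = ocls C D F0 G0 d"

definition coeq_mor where
  "coeq_mor C D F0 F1 G0 G1 f =
     pcls C D F0 F1 G0 G1 (ocls C D F0 G0 (Dom D f), ocls C D F0 G0 (Cod D f),
                           epath C D F1 G1 (mcls C D F1 G1 f))"

end

theory Submission
  imports Defs
begin


lemma cat_dom: "category C \<Longrightarrow> f \<in> Mor C \<Longrightarrow> Dom C f \<in> Obj C" unfolding category_def by blast
lemma cat_cod: "category C \<Longrightarrow> f \<in> Mor C \<Longrightarrow> Cod C f \<in> Obj C" unfolding category_def by blast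
lemma cat_id: "category C \<Longrightarrow> a \<in> Obj C \<Longrightarrow> Id C a \<in> Mor C \<and> Dom C (Id C a) = a \<and> Cod C (Id C a) = a"
  unfolding category_def by blast
lemma cat_comp: "category C \<Longrightarrow> f \<in> Mor C \<Longrightarrow> g \<in> Mor C \<Longrightarrow> Cod C f = Dom C g \<Longrightarrow>
   Comp C g f \<in> Mor C \<and> Dom C (Comp C g f) = Dom C f \<and> Cod C (Comp C g f) = Cod C g"
  unfolding category_def by blast
lemma cat_idr: "category C \<Longrightarrow> f \<in> Mor C \<Longrightarrow> Comp C f (Id C (Dom C f)) = f"
  unfolding category_def by blast
lemma cat_idl: "category C \<Longrightarrow> f \<in> Mor C \<Longrightarrow> Comp C (Id C (Cod C f)) f = f"
  unfolding category_def by blast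
lemma cat_assoc: "category C \<Longrightarrow> f \<in> Mor C \<Longrightarrow> g \<in> Mor C \<Longrightarrow> h \<in> Mor C \<Longrightarrow> Cod C f = Dom C g \<Longrightarrow> Cod C g = Dom C h \<Longrightarrow>
         Comp C h (Comp C g f) = Comp C (Comp C h g) f"
  unfolding category_def by blast

lemma fun_obj: "functor C D F0 F1 \<Longrightarrow> a \<in> Obj C \<Longrightarrow> F0 a \<in> Obj D" unfolding functor_def by blast
lemma fun_mor: "functor C D F0 F1 \<Longrightarrow> f \<in> Mor C \<Longrightarrow> F1 f \<in> Mor D \<and> Dom D (F1 f) = F0 (Dom C f) \<and> Cod D (F1 f) = F0 (Cod C f)"
  unfolding functor_def by blast
lemma fun_id: "functor C D F0 F1 \<Longrightarrow> a \<in> Obj C \<Longrightarrow> F1 (Id C a) = Id D (F0 a)" unfolding functor_def by blast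
lemma fun_comp: "functor C D F0 F1 \<Longrightarrow> f \<in> Mor C \<Longrightarrow> g \<in> Mor C \<Longrightarrow> Cod C f = Dom C g \<Longrightarrow> F1 (Comp C g f) = Comp D (F1 g) (F1 f)"
  unfolding functor_def by blast

fun evp :: "('x, 'y) cat \<Rightarrow> ('c \<Rightarrow> 'x) \<Rightarrow> ('e \<Rightarrow> 'y) \<Rightarrow> ('e \<Rightarrow> 'c) \<Rightarrow> 'c \<Rightarrow> 'e list \<Rightarrow> 'y" where
  "evp X k0 h1 tg a [] = Id X (k0 a)"
| "evp X k0 h1 tg a (e # es) = Comp X (evp X k0 h1 tg (tg e) es) (h1 e)"

locale cq =
  fixes C :: "('a,'b) cat" and D :: "('c,'d) cat" and F0 G0 :: "'a \<Rightarrow> 'c" and F1 G1 :: "'b \<Rightarrow> 'd"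
  assumes catC: "category C" and catD: "category D"
    and funF: "functor C D F0 F1" and funG: "functor C D G0 G1"
begin
abbreviation "oeq \<equiv> objeq C D F0 G0"
abbreviation "meq \<equiv> moreq C D F1 G1"
abbreviation "ocl \<equiv> ocls C D F0 G0"
abbreviation "mcl \<equiv> mcls C D F1 G1"
abbreviation "src \<equiv> qsrc C D F0 F1 G0 G1"
abbreviation "tgt \<equiv> qtgt C D F0 F1 G0 G1"
abbreviation "dist \<equiv> distinguished C D F1 G1"
abbreviation "ep \<equiv> epath C D F1 G1"
abbreviation "pok \<equiv> path_ok C D F0 F1 G0 G1"
abbreviation "vp \<equiv> valid_path C D F0 F1 G0 G1"
abbreviation "pc \<equiv> pcong C D F0 F1 G0 G1"
abbreviation "pcl \<equiv> pcls C D F0 F1 G0 G1"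
abbreviation "E \<equiv> coeq_cat C D F0 F1 G0 G1"
abbreviation "V \<equiv> Q0 C D F0 G0"
abbreviation "Ed \<equiv> Q1 C D F1 G1"

lemma oeq_D: "oeq x y \<Longrightarrow> x \<in> Obj D \<and> y \<in> Obj D"
  by (induction rule: objeq.induct) (auto intro: fun_obj[OF funF] fun_obj[OF funG])

lemma ocl_eq_iff: "x \<in> Obj D \<Longrightarrow> y \<in> Obj D \<Longrightarrow> ocl x = ocl y \<longleftrightarrow> oeq x y"
proof
  assume "x \<in> Obj D" "y \<in> Obj D" "ocl x = ocl y"
  then show "oeq x y" unfolding ocls_def by (metis mem_Collect_eq objeq.oe_refl)
next
  assume "oeq x y"
  then show "ocl x = ocl y" unfolding ocls_def by (intro Collect_cong) (meson objeq.oe_sym objeq.oe_trans)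
qed

lemma ocl_eqI: "oeq x y \<Longrightarrow> ocl x = ocl y"
  unfolding ocls_def by (intro Collect_cong) (meson objeq.oe_sym objeq.oe_trans)

lemma meq_D: "meq f g \<Longrightarrow> f \<in> Mor D \<and> g \<in> Mor D \<and> oeq (Dom D f) (Dom D g) \<and> oeq (Cod D f) (Cod D g)"
proof (induction rule: moreq.induct)
  case (me_refl f)
  then show ?case using catD by (simp add: cat_dom cat_cod objeq.oe_refl)
next
  case (me_gen f)
  then show ?case using fun_mor[OF funF] fun_mor[OF funG] catC cat_dom cat_cod
    by (metis objeq.oe_gen)
next
  case (me_sym x y)
  then show ?case by (meson objeq.oe_sym)
next
  case (me_trans x y z)
  then show ?case by (meson objeq.oe_trans)
qed

lemma mcl_eq_iff: "f \<in> Mor D \<Longrightarrow> g \<in> Mor D \<Longrightarrow> mcl f = mcl g \<longleftrightarrow> meq f g"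
proof
  assume "f \<in> Mor D" "g \<in> Mor D" "mcl f = mcl g"
  then show "meq f g" unfolding mcls_def by (metis mem_Collect_eq moreq.me_refl)
next
  assume "meq f g"
  then show "mcl f = mcl g" unfolding mcls_def by (intro Collect_cong) (meson moreq.me_sym moreq.me_trans)
qed

lemma src_mcl: "f \<in> Mor D \<Longrightarrow> src (mcl f) = ocl (Dom D f)"
proof -
  assume f: "f \<in> Mor D"
  define g where "g = (SOME g. g \<in> Mor D \<and> mcl g = mcl f)"
  have "g \<in> Mor D \<and> mcl g = mcl f" unfolding g_def by (rule someI[of _ f]) (simp add: f)
  then have "meq g f" using mcl_eq_iff f by blast
  then have "ocl (Dom D g) = ocl (Dom D f)" using meq_D ocl_eqI by blast
  then show ?thesis unfolding qsrc_def g_def[symmetric] .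
qed

lemma tgt_mcl: "f \<in> Mor D \<Longrightarrow> tgt (mcl f) = ocl (Cod D f)"
proof -
  assume f: "f \<in> Mor D"
  define g where "g = (SOME g. g \<in> Mor D \<and> mcl g = mcl f)"
  have "g \<in> Mor D \<and> mcl g = mcl f" unfolding g_def by (rule someI[of _ f]) (simp add: f)
  then have "meq g f" using mcl_eq_iff f by blast
  then have "ocl (Cod D g) = ocl (Cod D f)" using meq_D ocl_eqI by blast
  then show ?thesis unfolding qtgt_def g_def[symmetric] .
qed

lemma dist_mcl: "f \<in> Mor D \<Longrightarrow> dist (mcl f) \<Longrightarrow> ocl (Dom D f) = ocl (Cod D f)"
proof -
  assume f: "f \<in> Mor D" and "dist (mcl f)"
  then obtain d where d: "d \<in> Obj D" "mcl f = mcl (Id D d)" unfolding distinguished_def by blast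
  have i: "Id D d \<in> Mor D" "Dom D (Id D d) = d" "Cod D (Id D d) = d" using cat_id[OF catD d(1)] by auto
  have "meq f (Id D d)" using mcl_eq_iff f i d by blast
  then have "oeq (Dom D f) d" "oeq (Cod D f) d" using meq_D[of f "Id D d"] i by auto
  then show ?thesis by (metis ocl_eqI)
qed

lemma ocl_V: "d \<in> Obj D \<Longrightarrow> ocl d \<in> V" unfolding Q0_def by blast
lemma mcl_Ed: "f \<in> Mor D \<Longrightarrow> mcl f \<in> Ed" unfolding Q1_def by blast

lemma ep_ok: "f \<in> Mor D \<Longrightarrow> pok (ocl (Dom D f)) (ocl (Cod D f)) (ep (mcl f))"
  using dist_mcl[of f] src_mcl[of f] tgt_mcl[of f] mcl_Ed[of f] ocl_V cat_dom[OF catD] cat_cod[OF catD]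
  unfolding epath_def by auto

lemma pok_V: "pok a b p \<Longrightarrow> a \<in> V \<and> b \<in> V"
  by (induction p arbitrary: a) auto

lemma pok_append: "pok a b p \<Longrightarrow> pok b c q \<Longrightarrow> pok a c (p @ q)"
  by (induction p arbitrary: a) auto

lemma vp_simp: "vp (a, b, p) = pok a b p" unfolding valid_path_def by simp

lemma pc_valid: "pc s t \<Longrightarrow> vp s \<and> vp t \<and> fst s = fst t \<and> fst (snd s) = fst (snd t)"
proof (induction rule: pcong.induct)
  case (pc_refl t)
  then show ?case by simp
next
  case (pc_rel f' g')
  have c: "Comp D g' f' \<in> Mor D \<and> Dom D (Comp D g' f') = Dom D f' \<and> Cod D (Comp D g' f') = Cod D g'"
    using cat_comp[OF catD pc_rel(1,2,3)] .
  show ?case using ep_ok[of f'] ep_ok[of g'] ep_ok[of "Comp D g' f'"] c pc_rel pok_append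
    by (auto simp: vp_simp)
next
  case (pc_sym s t)
  then show ?case by simp
next
  case (pc_trans s t u)
  then show ?case by simp
next
  case (pc_comp a b p p' c q q')
  then show ?case by (auto simp: vp_simp intro: pok_append)
qed

lemma pcl_eqI: "pc s t \<Longrightarrow> pcl s = pcl t"
  unfolding pcls_def by (intro Collect_cong) (meson pcong.pc_sym pcong.pc_trans)

lemma rep_form: assumes "pok a b p"
  shows "\<exists>p'. (SOME t. t \<in> pcl (a,b,p)) = (a,b,p') \<and> pc (a,b,p) (a,b,p')"
proof -
  have "(a,b,p) \<in> pcl (a,b,p)" unfolding pcls_def using assms by (simp add: pcong.pc_refl vp_simp)
  then have "(SOME t. t \<in> pcl (a,b,p)) \<in> pcl (a,b,p)" by (rule someI)
  then have h: "pc (a,b,p) (SOME t. t \<in> pcl (a,b,p))" unfolding pcls_def by simp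
  then show ?thesis using pc_valid[OF h] by (metis prod.collapse fst_conv snd_conv)
qed

lemma E_Dom: "pok a b p \<Longrightarrow> Dom E (pcl (a,b,p)) = a"
  using rep_form[of a b p] unfolding coeq_cat_def by auto
lemma E_Cod: "pok a b p \<Longrightarrow> Cod E (pcl (a,b,p)) = b"
  using rep_form[of a b p] unfolding coeq_cat_def by auto
lemma E_Id: "Id E a = pcl (a,a,[])" unfolding coeq_cat_def by simp
lemma E_Obj: "Obj E = V" unfolding coeq_cat_def by simp
lemma E_Mor: "Mor E = pcl ` {t. vp t}" unfolding coeq_cat_def by simp
lemma E_MorI: "pok a b p \<Longrightarrow> pcl (a,b,p) \<in> Mor E" unfolding E_Mor by (auto simp: vp_simp)
lemma E_MorE: "M \<in> Mor E \<Longrightarrow> (\<And>a b p. M = pcl (a,b,p) \<Longrightarrow> pok a b p \<Longrightarrow> P) \<Longrightarrow> P"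
  unfolding E_Mor by (auto simp: valid_path_def split: prod.splits)

lemma E_Comp: assumes "pok a b p" "pok b c q"
  shows "Comp E (pcl (b,c,q)) (pcl (a,b,p)) = pcl (a,c,p@q)"
proof -
  obtain p' where p': "(SOME t. t \<in> pcl (a,b,p)) = (a,b,p')" "pc (a,b,p) (a,b,p')" using rep_form[OF assms(1)] by blast
  obtain q' where q': "(SOME t. t \<in> pcl (b,c,q)) = (b,c,q')" "pc (b,c,q) (b,c,q')" using rep_form[OF assms(2)] by blast
  have "Comp E (pcl (b,c,q)) (pcl (a,b,p)) = pcl (a,c,p'@q')" unfolding coeq_cat_def using p' q' by simp
  also have "\<dots> = pcl (a,c,p@q)" using pcong.pc_comp[OF p'(2) q'(2)] pcl_eqI by (metis pcong.pc_sym)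
  finally show ?thesis .
qed

end

context cq begin

lemma pok_cons: "pok a b (e # es) \<Longrightarrow> pok a (tgt e) [e] \<and> pok (tgt e) b es"
  using pok_V by auto

lemma category_E: "category E"
proof -
  have A: "\<forall>f\<in>Mor E. Dom E f \<in> Obj E \<and> Cod E f \<in> Obj E"
    by (auto elim!: E_MorE simp: E_Dom E_Cod E_Obj dest: pok_V)
  have B: "\<forall>a\<in>Obj E. Id E a \<in> Mor E \<and> Dom E (Id E a) = a \<and> Cod E (Id E a) = a"
    by (auto simp: E_Obj E_Id E_Dom E_Cod intro!: E_MorI)
  have C: "\<forall>f\<in>Mor E. \<forall>g\<in>Mor E. Cod E f = Dom E g \<longrightarrow>
         Comp E g f \<in> Mor E \<and> Dom E (Comp E g f) = Dom E f \<and> Cod E (Comp E g f) = Cod E g"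
  proof (intro ballI impI)
    fix f g assume "f \<in> Mor E" "g \<in> Mor E" "Cod E f = Dom E g"
    then obtain a b p a' c q where "f = pcl (a,b,p)" "pok a b p" "g = pcl (a',c,q)" "pok a' c q"
      by (auto elim!: E_MorE)
    moreover have "a' = b" using calculation \<open>Cod E f = Dom E g\<close> by (simp add: E_Dom E_Cod)
    ultimately show "Comp E g f \<in> Mor E \<and> Dom E (Comp E g f) = Dom E f \<and> Cod E (Comp E g f) = Cod E g"
      by (simp add: E_Comp E_Dom E_Cod E_MorI pok_append)
  qed
  have D1: "\<forall>f\<in>Mor E. Comp E f (Id E (Dom E f)) = f \<and> Comp E (Id E (Cod E f)) f = f"
  proof
    fix f assume "f \<in> Mor E"
    then obtain a b p where "f = pcl (a,b,p)" "pok a b p" by (auto elim!: E_MorE)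
    moreover have "pok a a []" "pok b b []" using pok_V calculation by auto
    ultimately show "Comp E f (Id E (Dom E f)) = f \<and> Comp E (Id E (Cod E f)) f = f"
      by (simp add: E_Comp E_Dom E_Cod E_Id)
  qed
  have D2: "\<forall>f\<in>Mor E. \<forall>g\<in>Mor E. \<forall>h\<in>Mor E. Cod E f = Dom E g \<longrightarrow> Cod E g = Dom E h \<longrightarrow>
         Comp E h (Comp E g f) = Comp E (Comp E h g) f"
  proof (intro ballI impI)
    fix f g h assume "f \<in> Mor E" "g \<in> Mor E" "h \<in> Mor E" "Cod E f = Dom E g" "Cod E g = Dom E h"
    then obtain a b p a' c q a'' d r where "f = pcl (a,b,p)" "pok a b p" "g = pcl (a',c,q)" "pok a' c q"
       "h = pcl (a'',d,r)" "pok a'' d r"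
      by (auto elim!: E_MorE)
    moreover have "a' = b" "a'' = c" using calculation \<open>Cod E f = Dom E g\<close> \<open>Cod E g = Dom E h\<close>
      by (simp_all add: E_Dom E_Cod)
    ultimately show "Comp E h (Comp E g f) = Comp E (Comp E h g) f"
      by (simp add: E_Comp pok_append)
  qed
  show ?thesis unfolding category_def using A B C D1 D2 by blast
qed

lemma coeq_mor_eq: "f \<in> Mor D \<Longrightarrow> coeq_mor C D F0 F1 G0 G1 f = pcl (ocl (Dom D f), ocl (Cod D f), ep (mcl f))"
  unfolding coeq_mor_def by simp

lemma functor_DE: "functor D E (coeq_obj C D F0 G0) (coeq_mor C D F0 F1 G0 G1)"
proof -
  have A: "\<forall>a\<in>Obj D. coeq_obj C D F0 G0 a \<in> Obj E" by (simp add: E_Obj coeq_obj_def ocl_V)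
  have B: "\<forall>f\<in>Mor D. coeq_mor C D F0 F1 G0 G1 f \<in> Mor E
      \<and> Dom E (coeq_mor C D F0 F1 G0 G1 f) = coeq_obj C D F0 G0 (Dom D f)
      \<and> Cod E (coeq_mor C D F0 F1 G0 G1 f) = coeq_obj C D F0 G0 (Cod D f)"
    by (simp add: coeq_mor_eq ep_ok E_MorI E_Dom E_Cod coeq_obj_def)
  have Cc: "\<forall>a\<in>Obj D. coeq_mor C D F0 F1 G0 G1 (Id D a) = Id E (coeq_obj C D F0 G0 a)"
  proof
    fix a assume a: "a \<in> Obj D"
    have "dist (mcl (Id D a))" unfolding distinguished_def using a by blast
    then show "coeq_mor C D F0 F1 G0 G1 (Id D a) = Id E (coeq_obj C D F0 G0 a)"
      using cat_id[OF catD a] by (simp add: coeq_mor_eq E_Id coeq_obj_def epath_def)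
  qed
  have Dd: "\<forall>f\<in>Mor D. \<forall>g\<in>Mor D. Cod D f = Dom D g \<longrightarrow> coeq_mor C D F0 F1 G0 G1 (Comp D g f)
       = Comp E (coeq_mor C D F0 F1 G0 G1 g) (coeq_mor C D F0 F1 G0 G1 f)"
  proof (intro ballI impI)
    fix f g assume fg: "f \<in> Mor D" "g \<in> Mor D" "Cod D f = Dom D g"
    have c: "Comp D g f \<in> Mor D \<and> Dom D (Comp D g f) = Dom D f \<and> Cod D (Comp D g f) = Cod D g"
      using cat_comp[OF catD fg] .
    have "Comp E (coeq_mor C D F0 F1 G0 G1 g) (coeq_mor C D F0 F1 G0 G1 f)
       = pcl (ocl (Dom D f), ocl (Cod D g), ep (mcl f) @ ep (mcl g))"
      using fg ep_ok[of f] ep_ok[of g] by (simp add: coeq_mor_eq E_Comp)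
    also have "\<dots> = pcl (ocl (Dom D f), ocl (Cod D g), ep (mcl (Comp D g f)))"
      by (rule pcl_eqI) (rule pcong.pc_rel[OF fg])
    finally show "coeq_mor C D F0 F1 G0 G1 (Comp D g f)
       = Comp E (coeq_mor C D F0 F1 G0 G1 g) (coeq_mor C D F0 F1 G0 G1 f)"
      using c by (simp add: coeq_mor_eq)
  qed
  show ?thesis unfolding functor_def using A B Cc Dd by blast
qed

lemma coeq_F_G_obj: "c \<in> Obj C \<Longrightarrow> coeq_obj C D F0 G0 (F0 c) = coeq_obj C D F0 G0 (G0 c)"
  unfolding coeq_obj_def by (rule ocl_eqI) (rule objeq.oe_gen)

lemma coeq_F_G_mor: "f \<in> Mor C \<Longrightarrow> coeq_mor C D F0 F1 G0 G1 (F1 f) = coeq_mor C D F0 F1 G0 G1 (G1 f)"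
proof -
  assume f: "f \<in> Mor C"
  have m: "meq (F1 f) (G1 f)" by (rule moreq.me_gen[OF f])
  then have "mcl (F1 f) = mcl (G1 f)" by (simp add: mcl_eq_iff meq_D)
  moreover have "ocl (Dom D (F1 f)) = ocl (Dom D (G1 f))" "ocl (Cod D (F1 f)) = ocl (Cod D (G1 f))"
    using meq_D[OF m] ocl_eqI by auto
  ultimately show ?thesis using meq_D[OF m] by (simp add: coeq_mor_eq)
qed

end


locale cqu = cq C D F0 G0 F1 G1 for C :: "('a,'b) cat" and D :: "('c,'d) cat"
   and F0 G0 :: "'a \<Rightarrow> 'c" and F1 G1 :: "'b \<Rightarrow> 'd" +
  fixes X :: "('x,'y) cat" and H0 :: "'c \<Rightarrow> 'x" and H1 :: "'d \<Rightarrow> 'y"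
  assumes catX: "category X" and funH: "functor D X H0 H1"
    and coH0: "\<forall>c\<in>Obj C. H0 (F0 c) = H0 (G0 c)" and coH1: "\<forall>f\<in>Mor C. H1 (F1 f) = H1 (G1 f)"
begin

definition "K0 A = H0 (SOME d. d \<in> Obj D \<and> ocl d = A)"
definition "h1 e = H1 (SOME f. f \<in> Mor D \<and> mcl f = e)"
abbreviation "ev \<equiv> evp X K0 h1 tgt"
definition "K1 M = (case (SOME t. t \<in> M) of (a,b,p) \<Rightarrow> ev a p)"

lemma H0_oeq: "oeq x y \<Longrightarrow> H0 x = H0 y"
  by (induction rule: objeq.induct) (auto simp: coH0)

lemma H1_meq: "meq x y \<Longrightarrow> H1 x = H1 y"
  by (induction rule: moreq.induct) (auto simp: coH1)

lemma K0_ocl: "d \<in> Obj D \<Longrightarrow> K0 (ocl d) = H0 d"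
proof -
  assume d: "d \<in> Obj D"
  define d' where "d' = (SOME d'. d' \<in> Obj D \<and> ocl d' = ocl d)"
  have "d' \<in> Obj D \<and> ocl d' = ocl d" unfolding d'_def by (rule someI[of _ d]) (simp add: d)
  then have "oeq d' d" using ocl_eq_iff d by blast
  then show ?thesis unfolding K0_def d'_def[symmetric] by (rule H0_oeq)
qed

lemma h1_mcl: "f \<in> Mor D \<Longrightarrow> h1 (mcl f) = H1 f"
proof -
  assume d: "f \<in> Mor D"
  define d' where "d' = (SOME d'. d' \<in> Mor D \<and> mcl d' = mcl f)"
  have "d' \<in> Mor D \<and> mcl d' = mcl f" unfolding d'_def by (rule someI[of _ f]) (simp add: d)
  then have "meq d' f" using mcl_eq_iff d by blast
  then show ?thesis unfolding h1_def d'_def[symmetric] by (rule H1_meq)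
qed

lemma ev_props: "pok a b p \<Longrightarrow> ev a p \<in> Mor X \<and> Dom X (ev a p) = K0 a \<and> Cod X (ev a p) = K0 b"
proof (induction p arbitrary: a)
  case Nil
  then obtain d where d: "d \<in> Obj D" "a = ocl d" "b = a" by (auto simp: Q0_def)
  then show ?case using cat_id[OF catX] fun_obj[OF funH] K0_ocl by auto
next
  case (Cons e es)
  then obtain f where f: "f \<in> Mor D" "e = mcl f" by (auto simp: Q1_def)
  have s: "src e = a" using Cons.prems by simp
  have ih: "ev (tgt e) es \<in> Mor X \<and> Dom X (ev (tgt e) es) = K0 (tgt e) \<and> Cod X (ev (tgt e) es) = K0 b"
    using Cons by simp
  have aa: "a = ocl (Dom D f)" using s f src_mcl by simp
  have hf: "h1 e \<in> Mor X \<and> Dom X (h1 e) = K0 a \<and> Cod X (h1 e) = K0 (tgt e)"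
    using aa f fun_mor[OF funH f(1)] cat_dom[OF catD f(1)] cat_cod[OF catD f(1)]
    by (simp add: h1_mcl src_mcl tgt_mcl K0_ocl)
  show ?case using cat_comp[OF catX] ih hf by simp
qed

lemma ev_append: "pok a b p \<Longrightarrow> pok b c q \<Longrightarrow> ev a (p @ q) = Comp X (ev b q) (ev a p)"
proof (induction p arbitrary: a)
  case Nil
  then show ?case using ev_props[OF Nil(2)] cat_idr[OF catX] by (metis append_Nil evp.simps(1) path_ok.simps(1))
next
  case (Cons e es)
  have s: "src e = a" "e \<in> Ed" and es: "pok (tgt e) b es" using Cons.prems by auto
  then obtain f where f: "f \<in> Mor D" "e = mcl f" by (auto simp: Q1_def)
  have aa: "a = ocl (Dom D f)" using s f src_mcl by simp
  have hf: "h1 e \<in> Mor X \<and> Dom X (h1 e) = K0 a \<and> Cod X (h1 e) = K0 (tgt e)"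
    using aa f fun_mor[OF funH f(1)] cat_dom[OF catD f(1)] cat_cod[OF catD f(1)]
    by (simp add: h1_mcl src_mcl tgt_mcl K0_ocl)
  have "ev a ((e # es) @ q) = Comp X (Comp X (ev b q) (ev (tgt e) es)) (h1 e)"
    using Cons.IH[OF es Cons.prems(2)] by simp
  also have "\<dots> = Comp X (ev b q) (Comp X (ev (tgt e) es) (h1 e))"
    using cat_assoc[OF catX] hf ev_props[OF es] ev_props[OF Cons.prems(2)] by metis
  finally show ?case by simp
qed

lemma ev_ep: "f \<in> Mor D \<Longrightarrow> ev (ocl (Dom D f)) (ep (mcl f)) = H1 f"
proof -
  assume f: "f \<in> Mor D"
  have hf: "H1 f \<in> Mor X \<and> Dom X (H1 f) = H0 (Dom D f) \<and> Cod X (H1 f) = H0 (Cod D f)"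
    using fun_mor[OF funH f] .
  show ?thesis
  proof (cases "dist (mcl f)")
    case True
    then obtain d where d: "d \<in> Obj D" "mcl f = mcl (Id D d)" unfolding distinguished_def by blast
    have i: "Id D d \<in> Mor D" "Dom D (Id D d) = d" "Cod D (Id D d) = d" using cat_id[OF catD d(1)] by auto
    have m: "meq f (Id D d)" using mcl_eq_iff f i d by blast
    then have "H1 f = H1 (Id D d)" by (rule H1_meq)
    also have "\<dots> = Id X (H0 d)" using fun_id[OF funH d(1)] .
    also have "H0 d = H0 (Dom D f)" using meq_D[OF m] i H0_oeq by metis
    finally show ?thesis using True f by (simp add: epath_def K0_ocl cat_dom[OF catD])
  next
    case False
    then have "ev (ocl (Dom D f)) (ep (mcl f)) = Comp X (Id X (K0 (tgt (mcl f)))) (H1 f)"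
      using f by (simp add: epath_def h1_mcl)
    also have "\<dots> = H1 f" using hf f cat_idl[OF catX] by (simp add: tgt_mcl K0_ocl cat_cod[OF catD]) metis
    finally show ?thesis .
  qed
qed

lemma ev_pc: "pc s t \<Longrightarrow> (case s of (a,b,p) \<Rightarrow> ev a p) = (case t of (a,b,p) \<Rightarrow> ev a p)"
proof (induction rule: pcong.induct)
  case (pc_rel f' g')
  have c: "Comp D g' f' \<in> Mor D \<and> Dom D (Comp D g' f') = Dom D f' \<and> Cod D (Comp D g' f') = Cod D g'"
    using cat_comp[OF catD pc_rel(1,2,3)] .
  have "ev (ocl (Dom D f')) (ep (mcl f') @ ep (mcl g')) = Comp X (H1 g') (H1 f')"
    using ev_append[OF ep_ok[OF pc_rel(1)] ep_ok[OF pc_rel(2), folded pc_rel(3)]] pc_rel ev_ep by simp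
  also have "\<dots> = H1 (Comp D g' f')" using fun_comp[OF funH pc_rel(1,2,3)] by simp
  also have "\<dots> = ev (ocl (Dom D (Comp D g' f'))) (ep (mcl (Comp D g' f')))" using ev_ep[of "Comp D g' f'"] c by simp
  finally show ?case using c by simp
next
  case (pc_comp a b p p' c q q')
  have v: "pok a b p" "pok a b p'" "pok b c q" "pok b c q'"
    using pc_valid[OF pc_comp(1)] pc_valid[OF pc_comp(2)] by (auto simp: vp_simp)
  show ?case using pc_comp.IH ev_append v by simp
qed auto

lemma K1_pcl: "pok a b p \<Longrightarrow> K1 (pcl (a,b,p)) = ev a p"
proof -
  assume h: "pok a b p"
  obtain p' where p': "(SOME t. t \<in> pcl (a,b,p)) = (a,b,p')" "pc (a,b,p) (a,b,p')" using rep_form[OF h] by blast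
  show ?thesis unfolding K1_def p'(1) using ev_pc[OF p'(2)] by simp
qed

lemma functor_K: "functor E X K0 K1"
proof -
  have A: "\<forall>a\<in>Obj E. K0 a \<in> Obj X"
    using fun_obj[OF funH] K0_ocl by (auto simp: E_Obj Q0_def)
  have B: "\<forall>f\<in>Mor E. K1 f \<in> Mor X \<and> Dom X (K1 f) = K0 (Dom E f) \<and> Cod X (K1 f) = K0 (Cod E f)"
    by (auto elim!: E_MorE simp: K1_pcl E_Dom E_Cod ev_props)
  have Cc: "\<forall>a\<in>Obj E. K1 (Id E a) = Id X (K0 a)"
    by (auto simp: E_Obj E_Id K1_pcl)
  have Dd: "\<forall>f\<in>Mor E. \<forall>g\<in>Mor E. Cod E f = Dom E g \<longrightarrow> K1 (Comp E g f) = Comp X (K1 g) (K1 f)"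
  proof (intro ballI impI)
    fix f g assume "f \<in> Mor E" "g \<in> Mor E" "Cod E f = Dom E g"
    then obtain a b p a' c q where "f = pcl (a,b,p)" "pok a b p" "g = pcl (a',c,q)" "pok a' c q"
      by (auto elim!: E_MorE)
    moreover have "a' = b" using calculation \<open>Cod E f = Dom E g\<close> by (simp add: E_Dom E_Cod)
    ultimately show "K1 (Comp E g f) = Comp X (K1 g) (K1 f)"
      by (simp add: E_Comp K1_pcl pok_append ev_append)
  qed
  show ?thesis unfolding functor_def using A B Cc Dd by blast
qed

lemma K_commute: "(\<forall>d\<in>Obj D. K0 (coeq_obj C D F0 G0 d) = H0 d) \<and> (\<forall>f\<in>Mor D. K1 (coeq_mor C D F0 F1 G0 G1 f) = H1 f)"
  by (auto simp: coeq_obj_def K0_ocl coeq_mor_eq K1_pcl ep_ok ev_ep)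

lemma K_unique:
  assumes fK: "functor E X K0' K1'" and hk0: "\<forall>d\<in>Obj D. K0' (coeq_obj C D F0 G0 d) = H0 d"
    and hk1: "\<forall>f\<in>Mor D. K1' (coeq_mor C D F0 F1 G0 G1 f) = H1 f"
  shows "(\<forall>e\<in>Obj E. K0' e = K0 e) \<and> (\<forall>m\<in>Mor E. K1' m = K1 m)"
proof -
  have o: "\<forall>e\<in>Obj E. K0' e = K0 e" using hk0 K0_ocl by (auto simp: E_Obj Q0_def coeq_obj_def)
  have p: "pok a b p \<Longrightarrow> K1' (pcl (a,b,p)) = ev a p" for a b p
  proof (induction p arbitrary: a)
    case Nil
    then have "a \<in> Obj E" "b = a" by (auto simp: E_Obj)
    then show ?case using fun_id[OF fK] o E_Id by simp
  next
    case (Cons e es)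
    have s: "src e = a" "e \<in> Ed" "\<not> dist e" and es: "pok (tgt e) b es" using Cons.prems by auto
    then obtain f where f: "f \<in> Mor D" "e = mcl f" by (auto simp: Q1_def)
    have e1: "pok a (tgt e) [e]" using pok_cons[OF Cons.prems] by blast
    have cm: "coeq_mor C D F0 F1 G0 G1 f = pcl (a, tgt e, [e])"
      using f s by (simp add: coeq_mor_eq src_mcl tgt_mcl epath_def)
    have "pcl (a,b,e#es) = Comp E (pcl (tgt e, b, es)) (pcl (a, tgt e, [e]))"
      using E_Comp[OF e1 es] by simp
    then have "K1' (pcl (a,b,e#es)) = Comp X (K1' (pcl (tgt e, b, es))) (K1' (pcl (a, tgt e, [e])))"
      using fun_comp[OF fK E_MorI[OF e1] E_MorI[OF es]] E_Cod[OF e1] E_Dom[OF es] by simp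
    also have "\<dots> = Comp X (ev (tgt e) es) (H1 f)" using Cons.IH[OF es] cm[symmetric] hk1 f by simp
    finally show ?case using f h1_mcl by simp
  qed
  have "\<forall>m\<in>Mor E. K1' m = K1 m" by (auto elim!: E_MorE simp: p K1_pcl)
  with o show ?thesis by blast
qed

end

theorem mainTheorem17:
  fixes C :: "('a, 'b) cat" and D :: "('c, 'd) cat"
    and F0 G0 :: "'a \<Rightarrow> 'c" and F1 G1 :: "'b \<Rightarrow> 'd"
  assumes "category C" and "category D"
    and "functor C D F0 F1" and "functor C D G0 G1"
  shows "is_coequalizer C D F0 F1 G0 G1 (coeq_cat C D F0 F1 G0 G1)
           (coeq_obj C D F0 G0) (coeq_mor C D F0 F1 G0 G1) TYPE('x \<times> 'y)"
proof -
  interpret cq C D F0 G0 F1 G1 using assms by unfold_locales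
  have U: "\<forall>(X :: ('x, 'y) cat) H0 H1.
        category X \<and> functor D X H0 H1
        \<and> (\<forall>c\<in>Obj C. H0 (F0 c) = H0 (G0 c)) \<and> (\<forall>f\<in>Mor C. H1 (F1 f) = H1 (G1 f))
        \<longrightarrow> (\<exists>K0 K1. functor E X K0 K1
               \<and> (\<forall>d\<in>Obj D. K0 (coeq_obj C D F0 G0 d) = H0 d) \<and> (\<forall>f\<in>Mor D. K1 (coeq_mor C D F0 F1 G0 G1 f) = H1 f)
               \<and> (\<forall>K0' K1'. functor E X K0' K1'
                     \<and> (\<forall>d\<in>Obj D. K0' (coeq_obj C D F0 G0 d) = H0 d) \<and> (\<forall>f\<in>Mor D. K1' (coeq_mor C D F0 F1 G0 G1 f) = H1 f)
                     \<longrightarrow> (\<forall>e\<in>Obj E. K0' e = K0 e) \<and> (\<forall>m\<in>Mor E. K1' m = K1 m)))"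
  proof (intro allI impI)
    fix X :: "('x, 'y) cat" and H0 H1
    assume h: "category X \<and> functor D X H0 H1
        \<and> (\<forall>c\<in>Obj C. H0 (F0 c) = H0 (G0 c)) \<and> (\<forall>f\<in>Mor C. H1 (F1 f) = H1 (G1 f))"
    interpret u: cqu C D F0 G0 F1 G1 X H0 H1 using h by unfold_locales auto
    show "\<exists>K0 K1. functor E X K0 K1
               \<and> (\<forall>d\<in>Obj D. K0 (coeq_obj C D F0 G0 d) = H0 d) \<and> (\<forall>f\<in>Mor D. K1 (coeq_mor C D F0 F1 G0 G1 f) = H1 f)
               \<and> (\<forall>K0' K1'. functor E X K0' K1'
                     \<and> (\<forall>d\<in>Obj D. K0' (coeq_obj C D F0 G0 d) = H0 d) \<and> (\<forall>f\<in>Mor D. K1' (coeq_mor C D F0 F1 G0 G1 f) = H1 f)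
                     \<longrightarrow> (\<forall>e\<in>Obj E. K0' e = K0 e) \<and> (\<forall>m\<in>Mor E. K1' m = K1 m))"
      using u.functor_K u.K_commute u.K_unique by blast
  qed
  show ?thesis unfolding is_coequalizer_def
    using category_E functor_DE coeq_F_G_obj coeq_F_G_mor U by blast
qed

end
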